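(* Let $\mathbb{F}\in\{\mathbb{R},\mathbb{C}\}$, let $A_1,A_2,\ldots$ be a sequence of matrices in $\mathbb{F}^{n\times n}$, and let $\mu$ be a matrix norm on $\mathbb{F}^{n\times n}$. Suppose that $\sum_{i=1}^\infty(\max(\mu(A_i),1)-1)$ converges and that $\sum_{i=1}^\infty(1-\min(\mu(A_i),1))$ diverges. Then all general products from $A_1,A_2,\ldots$ converge to $0$: for every permutation $\sigma$ of the positive integers, every integer $p\ge0$, and every sequence $(C_{p,r})_{r\ge1}$ of general products as defined below, $\lim_{r\to\infty}C_{p,r}=0$.
   Context: A matrix norm is a submultiplicative norm on $\mathbb{F}^{n\times n}$. General products: given a permutation $\sigma$ of the positive integers, set $B_i=A_{\sigma(i)}$; for an integer $p\ge0$ and each $r\ge1$, $C_{p,r}$ is a product of the matrices $B_{p+1},\ldots,B_{p+r}$, each used exactly once, taken in some order (the order may be chosen arbitrarily and independently for each $r$). *)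

theory Defs
  imports "HOL-Analysis.Analysis"
begin

definition matrix_norm :: "('a::{real_normed_field} ^'n^'n \<Rightarrow> real) \<Rightarrow> bool" where
  "matrix_norm \<mu> \<longleftrightarrow>
     (\<forall>A. \<mu> A = 0 \<longleftrightarrow> A = 0) \<and>
     (\<forall>A. 0 \<le> \<mu> A) \<and>
     (\<forall>c A. \<mu> (\<chi> i j. c * A $ i $ j) = norm c * \<mu> A) \<and>
     (\<forall>A B. \<mu> (A + B) \<le> \<mu> A + \<mu> B) \<and>
     (\<forall>A B. \<mu> (A ** B) \<le> \<mu> A * \<mu> B)"

definition list_mat_prod :: "(nat \<Rightarrow> 'a::semiring_1^'n^'n) \<Rightarrow> nat list \<Rightarrow> 'a^'n^'n" where
  "list_mat_prod B xs = foldr (\<lambda>i M. B i ** M) xs (mat 1)"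

definition is_general_product ::
  "(nat \<Rightarrow> 'a::semiring_1^'n^'n) \<Rightarrow> nat \<Rightarrow> nat \<Rightarrow> 'a^'n^'n \<Rightarrow> bool" where
  "is_general_product B p r C \<longleftrightarrow>
     (\<exists>xs. distinct xs \<and> set xs = {p+1..p+r} \<and> C = list_mat_prod B xs)"

end

theory Submission
  imports Defs
begin


definition Emat :: "'n::finite \<Rightarrow> 'n \<Rightarrow> 'a::real_normed_field^'n^'n" where
  "Emat k l = (\<chi> a b. if a = k \<and> b = l then 1 else 0)"

lemma ite10: "(if P then 1 else 0) * (x::'a::semiring_1) = (if P then x else 0)"
  "x * (if P then 1 else 0) = (if P then x else 0)" by simp_all

lemma Emat_mult1: "Emat i i ** M = (\<chi> a b. if a = i then M$i$b else 0)"
  by (simp add: Emat_def matrix_matrix_mult_def vec_eq_iff ite10 conj_commute)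

lemma Emat_mult: "Emat i i ** M ** Emat j j = (\<chi> a b. M$i$j * Emat i j $a$b)"
  unfolding Emat_mult1
  by (simp add: Emat_def matrix_matrix_mult_def vec_eq_iff ite10 if_distrib cong: if_cong)

lemma entry_bound:
  fixes \<mu> :: "'a::real_normed_field^'n::finite^'n \<Rightarrow> real"
  assumes mn: "matrix_norm \<mu>"
  shows "\<exists>K. \<forall>M. norm (M$i$j) \<le> K * \<mu> M"
proof -
  have pos: "\<mu> (Emat i j) > 0"
  proof -
    have "Emat i j \<noteq> (0::'a^'n^'n)" by (simp add: Emat_def vec_eq_iff)
    then show ?thesis using mn unfolding matrix_norm_def by (metis order_le_less)
  qed
  have "norm (M$i$j) \<le> (\<mu> (Emat i i) * \<mu> (Emat j j) / \<mu> (Emat i j)) * \<mu> M" for M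
  proof -
    have "norm (M$i$j) * \<mu> (Emat i j) = \<mu> (Emat i i ** M ** Emat j j)"
      using mn unfolding matrix_norm_def Emat_mult by simp
    also have "\<dots> \<le> \<mu> (Emat i i ** M) * \<mu> (Emat j j)"
      using mn unfolding matrix_norm_def by blast
    also have "\<dots> \<le> (\<mu> (Emat i i) * \<mu> M) * \<mu> (Emat j j)"
      using mn unfolding matrix_norm_def by (meson mult_right_mono)
    finally show ?thesis using pos by (simp add: field_simps)
  qed
  then show ?thesis by blast
qed

lemma list_prod_bound:
  assumes mn: "matrix_norm \<mu>"
  shows "xs \<noteq> [] \<Longrightarrow> \<mu> (list_mat_prod B xs) \<le> prod_list (map (\<lambda>i. \<mu> (B i)) xs)"
proof (induction xs)
  case Nil then show ?case by simp
next
  case (Cons i ys)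
  show ?case
  proof (cases "ys = []")
    case True then show ?thesis by (simp add: list_mat_prod_def)
  next
    case False
    have eq: "list_mat_prod B (i#ys) = B i ** list_mat_prod B ys" by (simp add: list_mat_prod_def)
    have "\<mu> (B i ** list_mat_prod B ys) \<le> \<mu> (B i) * \<mu> (list_mat_prod B ys)"
      using mn unfolding matrix_norm_def by blast
    also have "\<dots> \<le> \<mu> (B i) * prod_list (map (\<lambda>i. \<mu> (B i)) ys)"
      using Cons False mn unfolding matrix_norm_def by (simp add: mult_left_mono)
    finally show ?thesis using eq by simp
  qed
qed

lemma main_generic:
  fixes A :: "nat \<Rightarrow> 'a::real_normed_field^'n::finite^'n" and \<mu> :: "'a^'n^'n \<Rightarrow> real"
    and C :: "nat \<Rightarrow> 'a^'n^'n"
  assumes mn: "matrix_norm \<mu>"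
    and sf: "summable (\<lambda>i. max (\<mu> (A (Suc i))) 1 - 1)"
    and ns: "\<not> summable (\<lambda>i. 1 - min (\<mu> (A (Suc i))) 1)"
    and bij: "bij_betw \<sigma> {1..} {1..}"
    and gp: "\<forall>r\<ge>1. is_general_product (\<lambda>i. A (\<sigma> i)) p r (C r)"
  shows "C \<longlonglongrightarrow> 0"
proof -
  define a where "a k = \<mu> (A (Suc k))" for k
  define f where "f k = max (a k) 1 - 1" for k
  define g where "g k = 1 - min (a k) 1" for k
  define \<tau> where "\<tau> i = \<sigma> i - 1" for i
  define X where "X = suminf f"
  have mu0: "\<And>M. 0 \<le> \<mu> M" using mn unfolding matrix_norm_def by blast
  have a0: "0 \<le> a k" for k using mu0 a_def by simp
  have f0: "0 \<le> f k" for k unfolding f_def by simp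
  have g0: "0 \<le> g k" for k unfolding g_def by simp
  have sf': "summable f" using sf unfolding f_def a_def .
  have ns': "\<not> summable g" using ns unfolding g_def a_def .
  have \<sigma>1: "i \<ge> 1 \<Longrightarrow> \<sigma> i \<ge> 1" for i using bij unfolding bij_betw_def by auto
  have A\<tau>: "i \<ge> 1 \<Longrightarrow> \<mu> (A (\<sigma> i)) = a (\<tau> i)" for i
    using \<sigma>1[of i] unfolding a_def \<tau>_def by (simp add: Suc_diff_1)
  have inj\<tau>: "inj_on \<tau> {1..}"
  proof (rule inj_onI)
    fix x y assume "x \<in> {1..}" "y \<in> {1..}" "\<tau> x = \<tau> y"
    then show "x = y" using \<sigma>1[of x] \<sigma>1[of y] bij unfolding bij_betw_def inj_on_def \<tau>_def
      by (metis Suc_diff_1 atLeast_iff less_eq_Suc_le One_nat_def)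
  qed
  have sur\<tau>: "\<exists>i\<ge>1. \<tau> i = k" for k
  proof -
    have "Suc k \<in> \<sigma> ` {1..}" using bij unfolding bij_betw_def by auto
    then obtain i where "i \<ge> 1" "\<sigma> i = Suc k" by auto
    then show ?thesis unfolding \<tau>_def by auto
  qed
  have ak: "a k \<le> exp (f k - g k)" for k
  proof -
    have "a k = 1 + (f k - g k)" unfolding f_def g_def by (simp add: max_def min_def)
    then show ?thesis using exp_ge_add_one_self[of "f k - g k"] by linarith
  qed
  have stepA: "\<mu> (C r) \<le> exp (X - sum g (\<tau> ` {p+1..p+r}))" if r1: "r \<ge> 1" for r
  proof -
    obtain xs where xs: "distinct xs" "set xs = {p+1..p+r}"
      "C r = list_mat_prod (\<lambda>i. A (\<sigma> i)) xs"
      using gp r1 unfolding is_general_product_def by blast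
    have "xs \<noteq> []" using xs(2) r1 by auto
    then have "\<mu> (C r) \<le> prod_list (map (\<lambda>i. \<mu> (A (\<sigma> i))) xs)"
      using list_prod_bound[OF mn] xs(3) by simp
    also have "\<dots> = (\<Prod>i\<in>{p+1..p+r}. \<mu> (A (\<sigma> i)))"
      using xs(1,2) by (metis prod.distinct_set_conv_list)
    also have "\<dots> = (\<Prod>i\<in>{p+1..p+r}. a (\<tau> i))"
      by (rule prod.cong) (auto simp: A\<tau>)
    also have "\<dots> = (\<Prod>k\<in>\<tau> ` {p+1..p+r}. a k)"
    proof -
      have "inj_on \<tau> {p+1..p+r}" by (rule inj_on_subset[OF inj\<tau>]) auto
      then show ?thesis by (simp add: prod.reindex o_def)
    qed
    also have "\<dots> \<le> (\<Prod>k\<in>\<tau> ` {p+1..p+r}. exp (f k - g k))"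
      by (rule prod_mono) (simp add: a0 ak)
    also have "\<dots> = exp (sum f (\<tau> ` {p+1..p+r}) - sum g (\<tau> ` {p+1..p+r}))"
      by (simp add: exp_sum[symmetric] sum_subtractf[symmetric])
    also have "\<dots> \<le> exp (X - sum g (\<tau> ` {p+1..p+r}))"
      using sum_le_suminf[OF sf', of "\<tau> ` {p+1..p+r}"] f0 unfolding X_def by simp
    finally show ?thesis .
  qed
  have muC: "(\<lambda>r. \<mu> (C r)) \<longlonglongrightarrow> 0"
  proof (rule order_tendstoI)
    fix e :: real assume "e < 0" then show "\<forall>\<^sub>F r in sequentially. e < \<mu> (C r)"
      using mu0 by (simp add: less_le_trans)
  next
    fix e :: real assume e0: "0 < e"
    define P0 where "P0 = sum g (\<tau> ` {1..p})"
    obtain N where N: "sum g {..N} > X - ln e + P0"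
    proof -
      have "\<not> (\<forall>n. sum g {..n} \<le> X - ln e + P0)"
        using ns' bounded_imp_summable[of g] g0 by blast
      then show ?thesis using that by (meson not_le)
    qed
    define \<iota> where "\<iota> k = (SOME i. i \<ge> 1 \<and> \<tau> i = k)" for k
    have \<iota>: "\<iota> k \<ge> 1 \<and> \<tau> (\<iota> k) = k" for k
      unfolding \<iota>_def using someI_ex[OF sur\<tau>[of k]] .
    define R where "R = Max (\<iota> ` {..N})"
    have R: "k \<le> N \<Longrightarrow> \<iota> k \<le> R" for k unfolding R_def by simp
    show "\<forall>\<^sub>F r in sequentially. \<mu> (C r) < e"
    proof (rule eventually_sequentiallyI[of "R + 1"])
      fix r assume r: "R + 1 \<le> r"
      have sub: "{..N} \<subseteq> \<tau> ` {1..p+r}"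
      proof
        fix k assume "k \<in> {..N}"
        then have "\<iota> k \<in> {1..p+r}" using \<iota>[of k] R[of k] r by auto
        then show "k \<in> \<tau> ` {1..p+r}" using \<iota>[of k] by (metis image_eqI)
      qed
      have un: "\<tau> ` {1..p+r} = \<tau> ` {1..p} \<union> \<tau> ` {p+1..p+r}"
      proof -
        have "{1..p+r} = {1..p} \<union> {p+1..p+r}" by auto
        then show ?thesis by (metis image_Un)
      qed
      have dis: "\<tau> ` {1..p} \<inter> \<tau> ` {p+1..p+r} = {}"
      proof -
        have "inj_on \<tau> ({1..p} \<union> {p+1..p+r})" by (rule inj_on_subset[OF inj\<tau>]) auto
        then have "\<tau> ` ({1..p} \<inter> {p+1..p+r}) = \<tau> ` {1..p} \<inter> \<tau> ` {p+1..p+r}"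
          by (rule inj_on_image_Int) auto
        then show ?thesis by auto
      qed
      have "sum g {..N} \<le> sum g (\<tau> ` {1..p+r})"
        by (rule sum_mono2) (use sub g0 in auto)
      also have "\<dots> = P0 + sum g (\<tau> ` {p+1..p+r})"
        unfolding un P0_def by (rule sum.union_disjoint) (use dis in auto)
      finally have "X - sum g (\<tau> ` {p+1..p+r}) < ln e" using N by linarith
      then have "exp (X - sum g (\<tau> ` {p+1..p+r})) < e"
        using e0 by (metis exp_less_cancel_iff exp_ln)
      then show "\<mu> (C r) < e" using stepA[of r] r by linarith
    qed
  qed
  show ?thesis
  proof (rule vec_tendstoI, rule vec_tendstoI)
    fix i j
    obtain K where K: "\<And>M. norm (M$i$j) \<le> K * \<mu> M" using entry_bound[OF mn] by blast
    have "((\<lambda>r. C r $ i $ j) \<longlonglongrightarrow> 0)"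
      by (rule Lim_null_comparison[where g="\<lambda>r. K * \<mu> (C r)"])
        (use K tendsto_mult_right_zero[OF muC] in auto)
    then show "((\<lambda>r. C r $ i $ j) \<longlonglongrightarrow> 0 $ i $ j)" by simp
  qed
qed

theorem theorem3p2:
  shows "(\<forall>(A :: nat \<Rightarrow> real^'n::finite^'n) (\<mu> :: real^'n^'n \<Rightarrow> real).
      matrix_norm \<mu> \<longrightarrow>
      summable (\<lambda>i. max (\<mu> (A (Suc i))) 1 - 1) \<longrightarrow>
      \<not> summable (\<lambda>i. 1 - min (\<mu> (A (Suc i))) 1) \<longrightarrow>
      (\<forall>(\<sigma> :: nat \<Rightarrow> nat) (p :: nat) (C :: nat \<Rightarrow> real^'n::finite^'n).
         bij_betw \<sigma> {1..} {1..} \<longrightarrow>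
         (\<forall>r\<ge>1. is_general_product (\<lambda>i. A (\<sigma> i)) p r (C r)) \<longrightarrow>
         C \<longlonglongrightarrow> 0))
    \<and> (\<forall>(A :: nat \<Rightarrow> complex^'n::finite^'n) (\<mu> :: complex^'n^'n \<Rightarrow> real).
      matrix_norm \<mu> \<longrightarrow>
      summable (\<lambda>i. max (\<mu> (A (Suc i))) 1 - 1) \<longrightarrow>
      \<not> summable (\<lambda>i. 1 - min (\<mu> (A (Suc i))) 1) \<longrightarrow>
      (\<forall>(\<sigma> :: nat \<Rightarrow> nat) (p :: nat) (C :: nat \<Rightarrow> complex^'n::finite^'n).
         bij_betw \<sigma> {1..} {1..} \<longrightarrow>
         (\<forall>r\<ge>1. is_general_product (\<lambda>i. A (\<sigma> i)) p r (C r)) \<longrightarrow>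
         C \<longlonglongrightarrow> 0))"
proof (intro conjI allI impI)
  fix A :: "nat \<Rightarrow> real^'n::finite^'n" and \<mu> :: "real^'n^'n \<Rightarrow> real" and \<sigma> p and C :: "nat \<Rightarrow> real^'n^'n"
  assume "matrix_norm \<mu>" "summable (\<lambda>i. max (\<mu> (A (Suc i))) 1 - 1)"
    "\<not> summable (\<lambda>i. 1 - min (\<mu> (A (Suc i))) 1)" "bij_betw \<sigma> {1..} {1..}"
    "\<forall>r\<ge>1. is_general_product (\<lambda>i. A (\<sigma> i)) p r (C r)"
  then show "C \<longlonglongrightarrow> 0" by (rule main_generic)
next
  fix A :: "nat \<Rightarrow> complex^'n::finite^'n" and \<mu> :: "complex^'n^'n \<Rightarrow> real" and \<sigma> p and C :: "nat \<Rightarrow> complex^'n^'n"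
  assume "matrix_norm \<mu>" "summable (\<lambda>i. max (\<mu> (A (Suc i))) 1 - 1)"
    "\<not> summable (\<lambda>i. 1 - min (\<mu> (A (Suc i))) 1)" "bij_betw \<sigma> {1..} {1..}"
    "\<forall>r\<ge>1. is_general_product (\<lambda>i. A (\<sigma> i)) p r (C r)"
  then show "C \<longlonglongrightarrow> 0" by (rule main_generic)
qed

end
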